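(* Let $(V,E,\sigma)$ be an influence graph and let $\mu : V \rightarrow \{+,-\}$ be a (partial) vertex labeling. If the disjunctive logic program $P_C\cup\tau((V,E,\sigma),\mu)$ has an answer set, then $(V,E,\sigma)$ and $\mu$ are consistent.
   Context: An influence graph is a triple $(V,E,\sigma)$ where $V$ is a finite set of vertices, $E\subseteq V\times V$ is a set of directed edges (an edge from $j$ to $i$ is written $j\rightarrow i$), and $\sigma : E\rightarrow\{+,-\}$ is a partial labeling of the edges; in addition, some vertices of $V$ are designated as input vertices. Signs are multiplied as numbers ($++=--=+$, $+-=-+=-$). Given a partial vertex labeling $\mu: V\rightarrow\{+,-\}$, the pair $(V,E,\sigma)$ and $\mu$ are called consistent if there exist total extensions $\sigma':E\rightarrow\{+,-\}$ of $\sigma$ and $\mu':V\rightarrow\{+,-\}$ of $\mu$ such that for every non-input vertex $i\in V$ there is an edge $j\rightarrow i$ in $E$ with $\mu'(i)=\mu'(j)\sigma'(j,i)$. Answer set semantics: a disjunctive logic program is a set of rules $a_1;\dots;a_l \leftarrow b_1,\dots,b_m,\mathit{not}\ c_1,\dots,\mathit{not}\ c_n$ (with $l=0$ giving an integrity constraint, whose empty head is false). Rules with (capitalized) variables stand for all their ground instances obtained by substituting constants occurring in the program; a built-in comparison $S\neq T$ in a body keeps only instances where the substituted constants differ. For a set $X$ of ground atoms, the reduct $P^X$ consists of $\{a_1,\dots,a_l\}\leftarrow b_1,\dots,b_m$ for each ground rule with $\{c_1,\dots,c_n\}\cap X=\emptyset$; $X$ is an answer set of $P$ if it is a $\subseteq$-minimal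 model of $P^X$ (a rule is satisfied if some head atom is in $X$ whenever all $b_k$ are in $X$). Here $+$ and $-$ are constants and vertex names are constants. The instance $\tau((V,E,\sigma),\mu)$ is the set of facts: $\mathit{vertex}(i)$ for each $i\in V$; $\mathit{edge}(j,i)$ for each $j\rightarrow i$ in $E$; $\mathit{observedE}(j,i,s)$ whenever $\sigma(j,i)=s$ is defined; $\mathit{observedV}(i,s)$ whenever $\mu(i)=s$ is defined; $\mathit{input}(i)$ for each input vertex $i$. The program $P_C$ consists of the rules $\mathit{labelV}(V,+);\mathit{labelV}(V,-)\leftarrow \mathit{vertex}(V)$; $\mathit{labelE}(U,V,+);\mathit{labelE}(U,V,-)\leftarrow \mathit{edge}(U,V)$; $\mathit{labelV}(V,S)\leftarrow \mathit{observedV}(V,S)$; $\mathit{labelE}(U,V,S)\leftarrow \mathit{observedE}(U,V,S)$; $\mathit{receive}(V,+)\leftarrow \mathit{labelE}(U,V,S),\mathit{labelV}(U,S)$; $\mathit{receive}(V,-)\leftarrow \mathit{labelE}(U,V,S),\mathit{labelV}(U,T),S\neq T$; $\leftarrow \mathit{labelV}(V,S),\mathit{not}\ \mathit{receive}(V,S),\mathit{not}\ \mathit{input}(V)$. *)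

theory Defs
  imports Main
begin

datatype sign = Plus | Minus

fun smult :: "sign \<Rightarrow> sign \<Rightarrow> sign" where
  "smult Plus s = s"
| "smult Minus Plus = Minus"
| "smult Minus Minus = Plus"

text \<open>An influence graph: vertex set V, edge set E (pair (j,i) is the edge j -> i),
  partial edge labeling sigma, and set of input vertices Inp.\<close>

definition influence_graph ::
  "'v set \<Rightarrow> ('v \<times> 'v) set \<Rightarrow> ('v \<times> 'v \<rightharpoonup> sign) \<Rightarrow> 'v set \<Rightarrow> bool" where
  "influence_graph V E \<sigma> Inp \<longleftrightarrow> finite V \<and> E \<subseteq> V \<times> V \<and> dom \<sigma> \<subseteq> E \<and> Inp \<subseteq> V"

definition consistent ::
  "'v set \<Rightarrow> ('v \<times> 'v) set \<Rightarrow> ('v \<times> 'v \<rightharpoonup> sign) \<Rightarrow> 'v set \<Rightarrow> ('v \<rightharpoonup> sign) \<Rightarrow> bool" where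
  "consistent V E \<sigma> Inp \<mu> \<longleftrightarrow>
     (\<exists>\<sigma>' :: 'v \<times> 'v \<Rightarrow> sign. \<exists>\<mu>' :: 'v \<Rightarrow> sign.
        (\<forall>e \<in> E. \<forall>s. \<sigma> e = Some s \<longrightarrow> \<sigma>' e = s) \<and>
        (\<forall>i \<in> V. \<forall>s. \<mu> i = Some s \<longrightarrow> \<mu>' i = s) \<and>
        (\<forall>i \<in> V - Inp. \<exists>j. (j, i) \<in> E \<and> \<mu>' i = smult (\<mu>' j) (\<sigma>' (j, i))))"

record 'a rule =
  hd :: "'a set"
  pos :: "'a set"
  neg :: "'a set"

type_synonym 'a program = "'a rule set"

definition reduct :: "'a program \<Rightarrow> 'a set \<Rightarrow> 'a program" where
  "reduct P X = {\<lparr>hd = hd r, pos = pos r, neg = {}\<rparr> | r. r \<in> P \<and> neg r \<inter> X = {}}"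

definition is_model :: "'a program \<Rightarrow> 'a set \<Rightarrow> bool" where
  "is_model P X \<longleftrightarrow> (\<forall>r \<in> P. pos r \<subseteq> X \<longrightarrow> hd r \<inter> X \<noteq> {})"

definition answer_set :: "'a program \<Rightarrow> 'a set \<Rightarrow> bool" where
  "answer_set P X \<longleftrightarrow> is_model (reduct P X) X \<and> (\<forall>Y. Y \<subset> X \<longrightarrow> \<not> is_model (reduct P X) Y)"

datatype 'v cst = CV 'v | CPlus | CMinus

fun csign :: "sign \<Rightarrow> 'v cst" where
  "csign Plus = CPlus"
| "csign Minus = CMinus"

datatype 'v atom =
    Vertex "'v cst"
  | Edge "'v cst" "'v cst"
  | ObservedE "'v cst" "'v cst" "'v cst"
  | ObservedV "'v cst" "'v cst"
  | Input "'v cst"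
  | LabelV "'v cst" "'v cst"
  | LabelE "'v cst" "'v cst" "'v cst"
  | Receive "'v cst" "'v cst"

definition fact :: "'a \<Rightarrow> 'a rule" where
  "fact a = \<lparr>hd = {a}, pos = {}, neg = {}\<rparr>"

definition tau ::
  "'v set \<Rightarrow> ('v \<times> 'v) set \<Rightarrow> ('v \<times> 'v \<rightharpoonup> sign) \<Rightarrow> 'v set \<Rightarrow> ('v \<rightharpoonup> sign) \<Rightarrow> 'v atom program" where
  "tau V E \<sigma> Inp \<mu> =
      {fact (Vertex (CV i)) | i. i \<in> V}
    \<union> {fact (Edge (CV j) (CV i)) | j i. (j, i) \<in> E}
    \<union> {fact (ObservedE (CV j) (CV i) (csign s)) | j i s. \<sigma> (j, i) = Some s}
    \<union> {fact (ObservedV (CV i) (csign s)) | i s. \<mu> i = Some s}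
    \<union> {fact (Input (CV i)) | i. i \<in> Inp}"

text \<open>Herbrand universe: constants occurring in P_C \<union> tau (vertex names and +, -).\<close>
definition universe :: "'v set \<Rightarrow> 'v cst set" where
  "universe V = CV ` V \<union> {CPlus, CMinus}"

definition ground_PC :: "'v cst set \<Rightarrow> 'v atom program" where
  "ground_PC C =
      {\<lparr>hd = {LabelV v CPlus, LabelV v CMinus}, pos = {Vertex v}, neg = {}\<rparr> | v. v \<in> C}
    \<union> {\<lparr>hd = {LabelE u v CPlus, LabelE u v CMinus}, pos = {Edge u v}, neg = {}\<rparr> | u v. u \<in> C \<and> v \<in> C}
    \<union> {\<lparr>hd = {LabelV v s}, pos = {ObservedV v s}, neg = {}\<rparr> | v s. v \<in> C \<and> s \<in> C}
    \<union> {\<lparr>hd = {LabelE u v s}, pos = {ObservedE u v s}, neg = {}\<rparr> | u v s. u \<in> C \<and> v \<in> C \<and> s \<in> C}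
    \<union> {\<lparr>hd = {Receive v CPlus}, pos = {LabelE u v s, LabelV u s}, neg = {}\<rparr>
         | u v s. u \<in> C \<and> v \<in> C \<and> s \<in> C}
    \<union> {\<lparr>hd = {Receive v CMinus}, pos = {LabelE u v s, LabelV u t}, neg = {}\<rparr>
         | u v s t. u \<in> C \<and> v \<in> C \<and> s \<in> C \<and> t \<in> C \<and> s \<noteq> t}
    \<union> {\<lparr>hd = {}, pos = {LabelV v s}, neg = {Receive v s, Input v}\<rparr> | v s. v \<in> C \<and> s \<in> C}"

definition PC_tau ::
  "'v set \<Rightarrow> ('v \<times> 'v) set \<Rightarrow> ('v \<times> 'v \<rightharpoonup> sign) \<Rightarrow> 'v set \<Rightarrow> ('v \<rightharpoonup> sign) \<Rightarrow> 'v atom program" where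
  "PC_tau V E \<sigma> Inp \<mu> = ground_PC (universe V) \<union> tau V E \<sigma> Inp \<mu>"

end

theory Submission
  imports Defs
begin

lemma csign_inj[simp]: "(csign a = csign b) = (a = b)"
  by (cases a; cases b; simp)

lemma csign_univ[simp]: "csign a \<in> universe V"
  by (cases a; simp add: universe_def)

lemma csign_ne_CV[simp]: "csign a \<noteq> CV x" "CV x \<noteq> csign a"
  by (cases a; simp)+

lemma csign_cases: "csign a = CPlus \<or> csign a = CMinus"
  by (cases a; simp)

lemma smult_same[simp]: "smult a a = Plus"
  by (cases a; simp)

lemma smult_diff: "a \<noteq> b \<Longrightarrow> smult a b = Minus"
  by (cases a; cases b; simp)

lemma model_rule:
  assumes "is_model (reduct P X) X" "r \<in> P" "neg r \<inter> X = {}" "pos r \<subseteq> X"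
  shows "hd r \<inter> X \<noteq> {}"
proof -
  have "\<lparr>hd = hd r, pos = pos r, neg = {}\<rparr> \<in> reduct P X"
    using assms(2,3) unfolding reduct_def by blast
  then show ?thesis using assms(1,4) unfolding is_model_def by fastforce
qed

lemma model_rule0:
  assumes "is_model (reduct P X) X" "\<lparr>hd = H, pos = B, neg = {}\<rparr> \<in> P" "B \<subseteq> X"
  shows "H \<inter> X \<noteq> {}"
  using model_rule[OF assms(1,2)] assms(3) by simp

lemma model_intro:
  assumes "\<And>r. r \<in> P \<Longrightarrow> neg r \<inter> X = {} \<Longrightarrow> pos r \<subseteq> Y \<Longrightarrow> hd r \<inter> Y \<noteq> {}"
  shows "is_model (reduct P X) Y"
  using assms unfolding is_model_def reduct_def by auto

lemma fact_tau_iff: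
  "fact a \<in> tau V E \<sigma> Inp \<mu> \<longleftrightarrow>
     (\<exists>i. a = Vertex (CV i) \<and> i \<in> V) \<or> (\<exists>j i. a = Edge (CV j) (CV i) \<and> (j,i) \<in> E)
   \<or> (\<exists>j i s. a = ObservedE (CV j) (CV i) (csign s) \<and> \<sigma> (j,i) = Some s)
   \<or> (\<exists>i s. a = ObservedV (CV i) (csign s) \<and> \<mu> i = Some s)
   \<or> (\<exists>i. a = Input (CV i) \<and> i \<in> Inp)"
  unfolding tau_def fact_def by auto

lemma tau_fact: "r \<in> tau V E \<sigma> Inp \<mu> \<Longrightarrow> \<exists>a. r = fact a"
  unfolding tau_def by auto


lemma gV: "v \<in> C \<Longrightarrow> \<lparr>hd = {LabelV v CPlus, LabelV v CMinus}, pos = {Vertex v}, neg = {}\<rparr> \<in> ground_PC C"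
  unfolding ground_PC_def by (rule UnI1, (rule UnI1, (rule UnI1, (rule UnI1, (rule UnI1, (rule UnI1, blast))))))
lemma gE: "u \<in> C \<Longrightarrow> v \<in> C \<Longrightarrow> \<lparr>hd = {LabelE u v CPlus, LabelE u v CMinus}, pos = {Edge u v}, neg = {}\<rparr> \<in> ground_PC C"
  unfolding ground_PC_def by (rule UnI1, (rule UnI1, (rule UnI1, (rule UnI1, (rule UnI1, rule UnI2, blast)))))
lemma gOV: "v \<in> C \<Longrightarrow> s \<in> C \<Longrightarrow> \<lparr>hd = {LabelV v s}, pos = {ObservedV v s}, neg = {}\<rparr> \<in> ground_PC C"
  unfolding ground_PC_def by (rule UnI1, (rule UnI1, (rule UnI1, (rule UnI1, rule UnI2, blast))))
lemma gOE: "u \<in> C \<Longrightarrow> v \<in> C \<Longrightarrow> s \<in> C \<Longrightarrow> \<lparr>hd = {LabelE u v s}, pos = {ObservedE u v s}, neg = {}\<rparr> \<in> ground_PC C"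
  unfolding ground_PC_def by (rule UnI1, (rule UnI1, (rule UnI1, rule UnI2, blast)))
lemma gRP: "u \<in> C \<Longrightarrow> v \<in> C \<Longrightarrow> s \<in> C \<Longrightarrow> \<lparr>hd = {Receive v CPlus}, pos = {LabelE u v s, LabelV u s}, neg = {}\<rparr> \<in> ground_PC C"
  unfolding ground_PC_def by (rule UnI1, (rule UnI1, rule UnI2, blast))
lemma gRM: "u \<in> C \<Longrightarrow> v \<in> C \<Longrightarrow> s \<in> C \<Longrightarrow> t \<in> C \<Longrightarrow> s \<noteq> t \<Longrightarrow> \<lparr>hd = {Receive v CMinus}, pos = {LabelE u v s, LabelV u t}, neg = {}\<rparr> \<in> ground_PC C"
  unfolding ground_PC_def by (rule UnI1, rule UnI2, blast)
lemma gC: "v \<in> C \<Longrightarrow> s \<in> C \<Longrightarrow> \<lparr>hd = {}, pos = {LabelV v s}, neg = {Receive v s, Input v}\<rparr> \<in> ground_PC C"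
  unfolding ground_PC_def by (rule UnI2, blast)

lemma gPC_cases:
  assumes "r \<in> ground_PC C"
  obtains (V) v where "v \<in> C" "r = \<lparr>hd = {LabelV v CPlus, LabelV v CMinus}, pos = {Vertex v}, neg = {}\<rparr>"
  | (E) u v where "r = \<lparr>hd = {LabelE u v CPlus, LabelE u v CMinus}, pos = {Edge u v}, neg = {}\<rparr>"
  | (OV) v s where "r = \<lparr>hd = {LabelV v s}, pos = {ObservedV v s}, neg = {}\<rparr>"
  | (OE) u v s where "r = \<lparr>hd = {LabelE u v s}, pos = {ObservedE u v s}, neg = {}\<rparr>"
  | (RP) u v s where "r = \<lparr>hd = {Receive v CPlus}, pos = {LabelE u v s, LabelV u s}, neg = {}\<rparr>"
  | (RM) u v s t where "s \<noteq> t" "r = \<lparr>hd = {Receive v CMinus}, pos = {LabelE u v s, LabelV u t}, neg = {}\<rparr>"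
  | (C) v s where "r = \<lparr>hd = {}, pos = {LabelV v s}, neg = {Receive v s, Input v}\<rparr>"
  using assms unfolding ground_PC_def
  apply (elim UnE CollectE exE conjE)
  apply (erule V; assumption)
  apply (erule E)
  apply (erule OV)
  apply (erule OE)
  apply (erule RP)
  apply (erule RM; assumption)
  apply (erule C)
  done

theorem theorem1:
  fixes V :: "'v set" and E :: "('v \<times> 'v) set" and \<sigma> :: "'v \<times> 'v \<rightharpoonup> sign"
    and Inp :: "'v set" and \<mu> :: "'v \<rightharpoonup> sign"
  assumes "influence_graph V E \<sigma> Inp"
    and "dom \<mu> \<subseteq> V"
    and "\<exists>X. answer_set (PC_tau V E \<sigma> Inp \<mu>) X"
  shows "consistent V E \<sigma> Inp \<mu>"
proof -
  let ?P = "PC_tau V E \<sigma> Inp \<mu>"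
  let ?T = "tau V E \<sigma> Inp \<mu>"
  let ?C = "universe V"
  have EV: "E \<subseteq> V \<times> V" and domS: "dom \<sigma> \<subseteq> E"
    using assms(1) unfolding influence_graph_def by auto
  obtain X where ans: "answer_set ?P X" using assms(3) by blast
  have mX: "is_model (reduct ?P X) X" and minX: "\<And>Y. Y \<subset> X \<Longrightarrow> \<not> is_model (reduct ?P X) Y"
    using ans unfolding answer_set_def by auto
  have PC: "ground_PC ?C \<subseteq> ?P" and PT: "?T \<subseteq> ?P" unfolding PC_tau_def by auto
  have factX: "fact a \<in> ?T \<Longrightarrow> a \<in> X" for a
    using model_rule[OF mX, of "fact a"] PT by (auto simp: fact_def)
  have CVin: "i \<in> V \<Longrightarrow> CV i \<in> ?C" for i by (simp add: universe_def)
  define \<mu>' where "\<mu>' i = (case \<mu> i of Some s \<Rightarrow> s | None \<Rightarrow>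
       (if LabelV (CV i) CPlus \<in> X then Plus else Minus))" for i
  define \<sigma>' where "\<sigma>' e = (case \<sigma> e of Some s \<Rightarrow> s | None \<Rightarrow>
       (if LabelE (CV (fst e)) (CV (snd e)) CPlus \<in> X then Plus else Minus))" for e
  have labV: "LabelV (CV i) (csign (\<mu>' i)) \<in> X" if iV: "i \<in> V" for i
  proof (cases "\<mu> i")
    case None
    have "fact (Vertex (CV i)) \<in> ?T" using iV by (simp add: fact_tau_iff)
    hence "Vertex (CV i) \<in> X" by (rule factX)
    moreover have "\<lparr>hd = {LabelV (CV i) CPlus, LabelV (CV i) CMinus}, pos = {Vertex (CV i)}, neg = {}\<rparr> \<in> ?P"
      by (rule subsetD[OF PC gV[OF CVin[OF iV]]])
    ultimately have "LabelV (CV i) CPlus \<in> X \<or> LabelV (CV i) CMinus \<in> X"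
      by (auto dest!: model_rule0[OF mX])
    then show ?thesis using None by (auto simp: \<mu>'_def)
  next
    case (Some s)
    have "fact (ObservedV (CV i) (csign s)) \<in> ?T" using Some by (auto simp: fact_tau_iff)
    hence "ObservedV (CV i) (csign s) \<in> X" by (rule factX)
    moreover have "\<lparr>hd = {LabelV (CV i) (csign s)}, pos = {ObservedV (CV i) (csign s)}, neg = {}\<rparr> \<in> ?P"
      by (rule subsetD[OF PC gOV[OF CVin[OF iV] csign_univ]])
    ultimately have "LabelV (CV i) (csign s) \<in> X"
      by (auto dest!: model_rule0[OF mX])
    then show ?thesis using Some by (simp add: \<mu>'_def)
  qed
  have labE: "LabelE (CV j) (CV i) (csign (\<sigma>' (j,i))) \<in> X" if jiE: "(j,i) \<in> E" for j i
  proof -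
    have jV: "j \<in> V" and iV: "i \<in> V" using jiE EV by auto
    show ?thesis
    proof (cases "\<sigma> (j,i)")
      case None
      have "fact (Edge (CV j) (CV i)) \<in> ?T" using jiE by (simp add: fact_tau_iff)
      hence "Edge (CV j) (CV i) \<in> X" by (rule factX)
      moreover have "\<lparr>hd = {LabelE (CV j) (CV i) CPlus, LabelE (CV j) (CV i) CMinus}, pos = {Edge (CV j) (CV i)}, neg = {}\<rparr> \<in> ?P"
      by (rule subsetD[OF PC gE[OF CVin[OF jV] CVin[OF iV]]])
      ultimately have "LabelE (CV j) (CV i) CPlus \<in> X \<or> LabelE (CV j) (CV i) CMinus \<in> X"
        by (auto dest!: model_rule0[OF mX])
      then show ?thesis using None by (auto simp: \<sigma>'_def)
    next
      case (Some s)
      have "fact (ObservedE (CV j) (CV i) (csign s)) \<in> ?T" using Some by (auto simp: fact_tau_iff)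
      hence "ObservedE (CV j) (CV i) (csign s) \<in> X" by (rule factX)
      moreover have "\<lparr>hd = {LabelE (CV j) (CV i) (csign s)}, pos = {ObservedE (CV j) (CV i) (csign s)}, neg = {}\<rparr> \<in> ?P"
      by (rule subsetD[OF PC gOE[OF CVin[OF jV] CVin[OF iV] csign_univ]])
      ultimately have "LabelE (CV j) (CV i) (csign s) \<in> X"
        by (auto dest!: model_rule0[OF mX])
      then show ?thesis using Some by (simp add: \<sigma>'_def)
    qed
  qed
  have recX: "Receive (CV i) (csign (smult (\<mu>' j) (\<sigma>' (j,i)))) \<in> X" if jiE: "(j,i) \<in> E" for j i
  proof -
    have jV: "j \<in> V" and iV: "i \<in> V" using jiE EV by auto
    have l1: "LabelE (CV j) (CV i) (csign (\<sigma>' (j,i))) \<in> X" using labE[OF jiE] .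
    have l2: "LabelV (CV j) (csign (\<mu>' j)) \<in> X" using labV[OF jV] .
    show ?thesis
    proof (cases "\<sigma>' (j,i) = \<mu>' j")
      case True
      have "\<lparr>hd = {Receive (CV i) CPlus}, pos = {LabelE (CV j) (CV i) (csign (\<sigma>' (j,i))), LabelV (CV j) (csign (\<sigma>' (j,i)))}, neg = {}\<rparr> \<in> ?P"
      by (rule subsetD[OF PC gRP[OF CVin[OF jV] CVin[OF iV] csign_univ]])
      then show ?thesis using l1 l2 True by (auto dest!: model_rule0[OF mX])
    next
      case False
      have "\<lparr>hd = {Receive (CV i) CMinus}, pos = {LabelE (CV j) (CV i) (csign (\<sigma>' (j,i))), LabelV (CV j) (csign (\<mu>' j))}, neg = {}\<rparr> \<in> ?P"
      using False by (intro subsetD[OF PC gRM[OF CVin[OF jV] CVin[OF iV] csign_univ csign_univ]]) simp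
      then show ?thesis using l1 l2 False smult_diff[of "\<mu>' j" "\<sigma>' (j,i)"] by (auto dest!: model_rule0[OF mX])
    qed
  qed
  define Y where "Y = {a. fact a \<in> ?T} \<union> {LabelV (CV i) (csign (\<mu>' i)) | i. i \<in> V}
     \<union> {LabelE (CV j) (CV i) (csign (\<sigma>' (j,i))) | j i. (j,i) \<in> E}
     \<union> {Receive (CV i) (csign (smult (\<mu>' j) (\<sigma>' (j,i)))) | j i. (j,i) \<in> E}"
  have YX: "Y \<subseteq> X" using factX labV labE recX unfolding Y_def by blast
  have YVert: "\<exists>i. v = CV i \<and> i \<in> V" if "Vertex v \<in> Y" for v
    using that by (auto simp: Y_def fact_tau_iff)
  have YEdge: "\<exists>j i. u = CV j \<and> v = CV i \<and> (j,i) \<in> E" if "Edge u v \<in> Y" for u v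
    using that by (auto simp: Y_def fact_tau_iff)
  have YOV: "\<exists>i t. v = CV i \<and> s = csign t \<and> \<mu> i = Some t" if "ObservedV v s \<in> Y" for v s
    using that by (auto simp: Y_def fact_tau_iff)
  have YOE: "\<exists>j i t. u = CV j \<and> v = CV i \<and> s = csign t \<and> \<sigma> (j,i) = Some t" if "ObservedE u v s \<in> Y" for u v s
    using that by (auto simp: Y_def fact_tau_iff)
  have YLV: "\<exists>j. u = CV j \<and> j \<in> V \<and> s = csign (\<mu>' j)" if "LabelV u s \<in> Y" for u s
    using that by (auto simp: Y_def fact_tau_iff)
  have YLE: "\<exists>j i. u = CV j \<and> v = CV i \<and> (j,i) \<in> E \<and> s = csign (\<sigma>' (j,i))" if "LabelE u v s \<in> Y" for u v s
    using that by (auto simp: Y_def fact_tau_iff)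
  have YIn: "\<exists>i. v = CV i \<and> i \<in> Inp" if "Input v \<in> Y" for v
    using that by (auto simp: Y_def fact_tau_iff)
  have YRec: "\<exists>j i. v = CV i \<and> (j,i) \<in> E \<and> s = csign (smult (\<mu>' j) (\<sigma>' (j,i)))" if "Receive v s \<in> Y" for v s
    using that by (auto simp: Y_def fact_tau_iff)
  have YLVi: "LabelV (CV i) (csign (\<mu>' i)) \<in> Y" if "i \<in> V" for i using that by (auto simp: Y_def)
  have YLEi: "LabelE (CV j) (CV i) (csign (\<sigma>' (j,i))) \<in> Y" if "(j,i) \<in> E" for j i using that by (auto simp: Y_def)
  have YRi: "Receive (CV i) (csign (smult (\<mu>' j) (\<sigma>' (j,i)))) \<in> Y" if "(j,i) \<in> E" for j i using that by (auto simp: Y_def)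
  have mY: "is_model (reduct ?P X) Y"
  proof (rule model_intro)
    fix r assume rP: "r \<in> ?P" and nX: "neg r \<inter> X = {}" and pY: "pos r \<subseteq> Y"
    show "hd r \<inter> Y \<noteq> {}"
    proof (cases "hd r = {}")
      case True then show ?thesis using model_rule[OF mX rP nX] pY YX by auto
    next
      case hne: False
      from rP have "r \<in> ground_PC ?C \<or> r \<in> ?T" unfolding PC_tau_def by auto
      then show ?thesis
      proof
        assume "r \<in> ?T" then obtain a where "r = fact a" "fact a \<in> ?T" by (metis tau_fact)
        thus ?thesis unfolding Y_def fact_def by auto
      next
        assume "r \<in> ground_PC ?C"
        then show ?thesis
        proof (cases rule: gPC_cases)
          case (V v)
          then have "Vertex v \<in> Y" using pY by simp
          then obtain i where vi: "v = CV i" "i \<in> V" using YVert by blast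
          have "LabelV (CV i) (csign (\<mu>' i)) \<in> hd r" using V vi by (cases "\<mu>' i") simp_all
          then show ?thesis using YLVi[OF vi(2)] by blast
        next
          case (E u v)
          then have "Edge u v \<in> Y" using pY by simp
          then obtain j i where ji: "u = CV j" "v = CV i" "(j,i) \<in> E" using YEdge by blast
          have "LabelE (CV j) (CV i) (csign (\<sigma>' (j,i))) \<in> hd r" using E ji by (cases "\<sigma>' (j,i)") simp_all
          then show ?thesis using YLEi[OF ji(3)] by blast
        next
          case (OV v s)
          then have "ObservedV v s \<in> Y" using pY by simp
          then obtain i t where it: "v = CV i" "s = csign t" "\<mu> i = Some t" using YOV by blast
          have iV: "i \<in> V" using assms(2) it(3) by auto
          have "\<mu>' i = t" using it(3) by (simp add: \<mu>'_def)
          then have "LabelV (CV i) (csign (\<mu>' i)) \<in> hd r" using OV it by simp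
          then show ?thesis using YLVi[OF iV] by blast
        next
          case (OE u v s)
          then have "ObservedE u v s \<in> Y" using pY by simp
          then obtain j i t where it: "u = CV j" "v = CV i" "s = csign t" "\<sigma> (j,i) = Some t" using YOE by blast
          have jiE: "(j,i) \<in> E" using domS it(4) by auto
          have "\<sigma>' (j,i) = t" using it(4) by (simp add: \<sigma>'_def)
          then have "LabelE (CV j) (CV i) (csign (\<sigma>' (j,i))) \<in> hd r" using OE it by simp
          then show ?thesis using YLEi[OF jiE] by blast
        next
          case (RP u v s)
          then have m1: "LabelE u v s \<in> Y" and m2: "LabelV u s \<in> Y" using pY by simp_all
          obtain j i where ji: "u = CV j" "v = CV i" "(j,i) \<in> E" "s = csign (\<sigma>' (j,i))" using YLE[OF m1] by blast
          obtain j' where j': "u = CV j'" "s = csign (\<mu>' j')" using YLV[OF m2] by blast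
          have "\<sigma>' (j,i) = \<mu>' j" using ji j' by simp
          then have "Receive (CV i) (csign (smult (\<mu>' j) (\<sigma>' (j,i)))) \<in> hd r" using RP ji by simp
          then show ?thesis using YRi[OF ji(3)] by blast
        next
          case (RM u v s t)
          then have m1: "LabelE u v s \<in> Y" and m2: "LabelV u t \<in> Y" using pY by simp_all
          obtain j i where ji: "u = CV j" "v = CV i" "(j,i) \<in> E" "s = csign (\<sigma>' (j,i))" using YLE[OF m1] by blast
          obtain j' where j': "u = CV j'" "t = csign (\<mu>' j')" using YLV[OF m2] by blast
          have "\<sigma>' (j,i) \<noteq> \<mu>' j" using ji j' RM(1) by auto
          then have "smult (\<mu>' j) (\<sigma>' (j,i)) = Minus" using smult_diff by metis
          then have "Receive (CV i) (csign (smult (\<mu>' j) (\<sigma>' (j,i)))) \<in> hd r" using RM ji by simp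
          then show ?thesis using YRi[OF ji(3)] by blast
        next
          case (C v s)
          then show ?thesis using hne by simp
        qed
      qed
    qed
  qed
  have XY: "X = Y" using minX[of Y] mY YX by blast
  have h1: "\<forall>e \<in> E. \<forall>s. \<sigma> e = Some s \<longrightarrow> \<sigma>' e = s" by (simp add: \<sigma>'_def)
  have h2: "\<forall>i \<in> V. \<forall>s. \<mu> i = Some s \<longrightarrow> \<mu>' i = s" by (simp add: \<mu>'_def)
  have h3: "\<exists>j. (j, i) \<in> E \<and> \<mu>' i = smult (\<mu>' j) (\<sigma>' (j, i))" if iVI: "i \<in> V - Inp" for i
  proof -
    have iV: "i \<in> V" using iVI by simp
    let ?r = "\<lparr>hd = {}, pos = {LabelV (CV i) (csign (\<mu>' i))}, neg = {Receive (CV i) (csign (\<mu>' i)), Input (CV i)}\<rparr>"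
    have rP: "?r \<in> ?P" by (rule subsetD[OF PC gC[OF CVin[OF iV] csign_univ]])
    have "neg ?r \<inter> X \<noteq> {}"
      using model_rule[OF mX rP] labV[OF iV] by auto
    hence "Receive (CV i) (csign (\<mu>' i)) \<in> Y \<or> Input (CV i) \<in> Y" using XY by auto
    moreover have "Input (CV i) \<notin> Y" using YIn iVI by auto
    ultimately have rec: "Receive (CV i) (csign (\<mu>' i)) \<in> Y" by blast
    then show ?thesis unfolding Y_def by (auto simp: fact_tau_iff)
  qed
  show ?thesis unfolding consistent_def
  proof (rule exI[of _ \<sigma>'], rule exI[of _ \<mu>'], intro conjI)
    show "\<forall>e \<in> E. \<forall>s. \<sigma> e = Some s \<longrightarrow> \<sigma>' e = s" by (rule h1)
    show "\<forall>i \<in> V. \<forall>s. \<mu> i = Some s \<longrightarrow> \<mu>' i = s" by (rule h2)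
    show "\<forall>i \<in> V - Inp. \<exists>j. (j, i) \<in> E \<and> \<mu>' i = smult (\<mu>' j) (\<sigma>' (j, i))"
      using h3 by (rule ballI)
  qed
qed
end
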